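(* Let $u,v,s$ satisfy $1<s<u<v^{-1}$ and $q=s^{-2}$. Then the constants $$a=\frac{ v (u-s^{-1}) (s^{-1} u-1)}{(1-u v) (1- s^{-2} u v)},\qquad b=\frac{ s^2-1}{(u-s)(1-su)},$$ $$c=\frac{1}{2} \left(a \left(\frac{1}{(u-s)^2}-\frac{s^2}{(1-s u)^2}\right)-\frac{s^{-4} v^2}{(1-s^{-2} u v)^2}+\frac{v^2}{(1-u v)^2} \right),\qquad d=\frac{- \sqrt{2 c}}{b}$$ satisfy $a>0$, $b<0$, $c>0$, $d>0$. *)

theory Defs
  imports Complex_Main
begin
end

theory Submission
  imports Defs
begin

theorem lemma5p1:
  fixes u v s q a b c d :: real
  assumes "1 < s" and "s < u" and "u < inverse v"
    and "q = s powi (-2)"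
    and "a = v * (u - inverse s) * (inverse s * u - 1) / ((1 - u * v) * (1 - s powi (-2) * u * v))"
    and "b = (s^2 - 1) / ((u - s) * (1 - s * u))"
    and "c = (1/2) * (a * (1 / (u - s)^2 - s^2 / (1 - s * u)^2)
                 - s powi (-4) * v^2 / (1 - s powi (-2) * u * v)^2
                 + v^2 / (1 - u * v)^2)"
    and "d = - sqrt (2 * c) / b"
  shows "a > 0 \<and> b < 0 \<and> c > 0 \<and> d > 0"
proof -
  have s0: "s > 0" using assms(1) by simp
  have u1: "u > 1" using assms by simp
  have iv: "inverse v > 0" using u1 assms(3) by linarith
  hence v0: "v > 0" using inverse_positive_iff_positive by blast
  have uv: "u * v < 1" using assms(3) v0
    by (metis divide_inverse_commute mult.commute pos_less_divide_eq inverse_eq_divide)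
  define w where "w = inverse s"
  have w0: "w > 0" and w1: "w < 1" using assms(1) s0 by (auto simp: w_def inverse_less_1_iff)
  have p2: "s powi (-2) = w^2" by (simp add: w_def power_int_minus power_inverse)
  have p4: "s powi (-4) = w^4" by (simp add: w_def power_int_minus power_inverse)
  have sw: "s * w = 1" using s0 by (simp add: w_def)
  have w2uv: "w^2 * u * v < 1"
  proof -
    have "w^2 < 1" using w0 w1 by (simp add: power_less_one_iff)
    hence "w^2 * (u*v) < 1 * 1" using uv u1 v0
      by (intro mult_strict_mono') auto
    thus ?thesis by (simp add: mult.assoc)
  qed
  have wu: "u * w > 1"
  proof -
    have "u * w > s * w" using assms(2) w0 by simp
    thus ?thesis using sw by simp
  qed
  have A: "a > 0"
  proof -
    have "u - w > 0" using w1 u1 by simp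
    moreover have "w * u - 1 > 0" using wu by (simp add: mult.commute)
    moreover have "(1 - u*v) * (1 - w^2*u*v) > 0" using uv w2uv by simp
    ultimately show ?thesis using v0 assms(5) p2 by (simp add: w_def)
  qed
  have B: "b < 0"
  proof -
    have "s^2 - 1 > 0" using assms(1) by (simp add: one_less_power)
    moreover have "(u - s) * (1 - s*u) < 0"
    proof -
      have "s*u > 1*1" using assms(1,2) u1 by (intro mult_strict_mono') auto
      thus ?thesis using assms(2) by (intro mult_pos_neg) auto
    qed
    ultimately show ?thesis using assms(6) by (simp add: divide_pos_neg)
  qed
  have e1: "s^2 / (1 - s*u)^2 = 1 / (u - w)^2"
  proof -
    have "1 - s*u = s * (w - u)" using sw by (simp add: algebra_simps)
    hence "(1 - s*u)^2 = s^2 * (u - w)^2" by (simp add: power_mult_distrib power2_commute)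
    thus ?thesis using s0 by simp
  qed
  have t1: "1 / (u - s)^2 - s^2 / (1 - s * u)^2 > 0"
  proof -
    have "0 < u - s" "u - s < u - w" using assms(2) w1 assms(1) by auto
    hence "(u - s)^2 < (u - w)^2" by (simp add: power_strict_mono)
    hence "1 / (u - w)^2 < 1 / (u - s)^2" using assms(2)
      by (intro divide_strict_left_mono) (auto intro!: mult_pos_pos)
    thus ?thesis using e1 by simp
  qed
  have t2: "w^4 * v^2 / (1 - w^2 * u * v)^2 < v^2 / (1 - u * v)^2"
  proof -
    have "w^2 * v / (1 - w^2*u*v) < v / (1 - u*v)"
    proof -
      have d1: "1 - w^2*u*v > 0" "1 - u*v > 0" using uv w2uv by auto
      have "w^2 < 1" using w0 w1 by (simp add: power_less_one_iff)
      hence "w^2 * v * (1 - u*v) < v * (1 - w^2*u*v)" using v0 by (simp add: algebra_simps)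
      thus ?thesis using d1 by (simp add: divide_simps)
    qed
    moreover have "0 \<le> w^2 * v / (1 - w^2*u*v)" using w2uv v0 by simp
    ultimately have "(w^2 * v / (1 - w^2*u*v))^2 < (v / (1 - u*v))^2"
      by (simp add: power_strict_mono)
    thus ?thesis by (simp add: power_divide power_mult_distrib flip: power_mult)
  qed
  have C: "c > 0"
    using assms(7) p2 p4 t2 mult_pos_pos[OF A t1] by simp
  have D: "d > 0"
    using assms(8) B C by (simp add: divide_pos_neg)
  show ?thesis using A B C D by simp
qed

end
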